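(* Let $(X,d)\in\mathfrak U$. Then for every $r\in\operatorname{Sp}(X)$ the set $\mathbf B_X$ contains exactly one ball of radius $r$.
   Context: $\operatorname{Sp}(X)=\{d(x,y):x,y\in X,\ x\neq y\}$; $\mathfrak U$ is the class of finite ultrametric spaces $X$ with $|\operatorname{Sp}(X)|=|X|-1$. For $t\in X$ and $r\ge0$, $B_r(t)=\{x\in X: d(x,t)\leqslant r\}$; $\operatorname{Sp}_t(X)=\{d(x,t):x\in X,\ x\neq t\}$; $\mathbf B_X=\{B_r(t): t\in X,\ r\in\operatorname{Sp}_t(X)\}$. A ball of radius $r$ in $\mathbf B_X$ means a set $B_r(t)$ with $t\in X$ and $r\in\operatorname{Sp}_t(X)$. *)

theory Defs
  imports Complex_Main
begin

definition ultrametric_space :: "'a set \<Rightarrow> ('a \<Rightarrow> 'a \<Rightarrow> real) \<Rightarrow> bool" where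
  "ultrametric_space X d \<longleftrightarrow>
     (\<forall>x\<in>X. \<forall>y\<in>X. d x y \<ge> 0) \<and>
     (\<forall>x\<in>X. \<forall>y\<in>X. d x y = 0 \<longleftrightarrow> x = y) \<and>
     (\<forall>x\<in>X. \<forall>y\<in>X. d x y = d y x) \<and>
     (\<forall>x\<in>X. \<forall>y\<in>X. \<forall>z\<in>X. d x z \<le> max (d x y) (d y z))"

definition Sp :: "'a set \<Rightarrow> ('a \<Rightarrow> 'a \<Rightarrow> real) \<Rightarrow> real set" where
  "Sp X d = {d x y | x y. x \<in> X \<and> y \<in> X \<and> x \<noteq> y}"

definition Sp_at :: "'a set \<Rightarrow> ('a \<Rightarrow> 'a \<Rightarrow> real) \<Rightarrow> 'a \<Rightarrow> real set" where
  "Sp_at X d t = {d x t | x. x \<in> X \<and> x \<noteq> t}"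

definition closed_ball_in :: "'a set \<Rightarrow> ('a \<Rightarrow> 'a \<Rightarrow> real) \<Rightarrow> real \<Rightarrow> 'a \<Rightarrow> 'a set" where
  "closed_ball_in X d r t = {x \<in> X. d x t \<le> r}"

text \<open>The class \<open>\<frakU>\<close>: finite ultrametric spaces with |Sp(X)| = |X| - 1
  (written as |Sp(X)| + 1 = |X|, which also forces X nonempty).\<close>
definition class_U :: "'a set \<Rightarrow> ('a \<Rightarrow> 'a \<Rightarrow> real) \<Rightarrow> bool" where
  "class_U X d \<longleftrightarrow> finite X \<and> ultrametric_space X d \<and> card (Sp X d) + 1 = card X"

definition balls_of :: "'a set \<Rightarrow> ('a \<Rightarrow> 'a \<Rightarrow> real) \<Rightarrow> 'a set set" where
  "balls_of X d = {closed_ball_in X d r t | r t. t \<in> X \<and> r \<in> Sp_at X d t}"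

definition is_ball_of_radius :: "'a set \<Rightarrow> ('a \<Rightarrow> 'a \<Rightarrow> real) \<Rightarrow> real \<Rightarrow> 'a set \<Rightarrow> bool" where
  "is_ball_of_radius X d r B \<longleftrightarrow> (\<exists>t\<in>X. r \<in> Sp_at X d t \<and> B = closed_ball_in X d r t)"

end

theory Submission
  imports Defs
begin

lemma um_mono: "ultrametric_space X d \<Longrightarrow> Y \<subseteq> X \<Longrightarrow> ultrametric_space Y d"
  unfolding ultrametric_space_def by blast

lemma Sp_finite: "finite X \<Longrightarrow> finite (Sp X d)"
proof -
  assume "finite X"
  have "Sp X d \<subseteq> (\<lambda>(x,y). d x y) ` (X \<times> X)" unfolding Sp_def by auto
  thus ?thesis using \<open>finite X\<close> by (meson finite_SigmaI finite_imageI finite_subset)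
qed

lemma step:
  assumes um: "ultrametric_space (insert x Y) d" and fin: "finite Y" and ne: "Y \<noteq> {}" and xY: "x \<notin> Y"
  shows "card (Sp (insert x Y) d) \<le> card (Sp Y d) + 1"
proof -
  define m where "m = Min ((\<lambda>y. d x y) ` Y)"
  have "m \<in> (\<lambda>y. d x y) ` Y" unfolding m_def using fin ne by (intro Min_in) auto
  then obtain y0 where y0: "y0 \<in> Y" "d x y0 = m" by auto
  have mle: "\<And>v. v \<in> Y \<Longrightarrow> m \<le> d x v" unfolding m_def using fin by auto
  have U: "\<forall>a\<in>insert x Y. \<forall>b\<in>insert x Y. a \<noteq> b \<longrightarrow> d a b = d b a"
    "\<forall>a\<in>insert x Y. \<forall>b\<in>insert x Y. \<forall>c\<in>insert x Y. d a c \<le> max (d a b) (d b c)"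
    using um unfolding ultrametric_space_def by blast+
  have key: "\<And>v. v \<in> Y \<Longrightarrow> d x v \<in> Sp Y d \<union> {m}"
  proof -
    fix v assume v: "v \<in> Y"
    show "d x v \<in> Sp Y d \<union> {m}"
    proof (cases "d x v = m")
      case True thus ?thesis by simp
    next
      case False
      hence gt: "d x v > m" using mle[OF v] by simp
      have ne0: "y0 \<noteq> v" using False y0 by auto
      have a: "d x v \<le> max (d x y0) (d y0 v)" using U(2) v y0 by auto
      have b: "d y0 v \<le> max (d y0 x) (d x v)" using U(2) v y0 by auto
      have c: "d y0 x = d x y0" using U(1) y0 xY by force
      have "d x v = d y0 v" using a b c gt y0 by (auto simp: max_def split: if_splits)
      thus ?thesis using ne0 v y0 unfolding Sp_def by auto
    qed
  qed
  have "Sp (insert x Y) d \<subseteq> Sp Y d \<union> {m}"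
  proof
    fix s assume "s \<in> Sp (insert x Y) d"
    then obtain u v where uv: "s = d u v" "u \<in> insert x Y" "v \<in> insert x Y" "u \<noteq> v"
      unfolding Sp_def by auto
    show "s \<in> Sp Y d \<union> {m}"
    proof (cases "u = x")
      case True thus ?thesis using uv key by auto
    next
      case F1: False
      show ?thesis
      proof (cases "v = x")
        case True
        hence "s = d x u" using uv U(1) by metis
        thus ?thesis using key F1 uv by auto
      next
        case False thus ?thesis using F1 uv unfolding Sp_def by auto
      qed
    qed
  qed
  hence "card (Sp (insert x Y) d) \<le> card (Sp Y d \<union> {m})"
    using Sp_finite[OF fin] by (intro card_mono) auto
  also have "\<dots> \<le> card (Sp Y d) + 1" using card_Un_le[of "Sp Y d" "{m}"] by simp
  finally show ?thesis .
qed

lemma L2: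
  assumes "finite A" "finite Y" "Y \<noteq> {}"
  shows "ultrametric_space (A \<union> Y) d \<Longrightarrow> card (Sp (A \<union> Y) d) \<le> card (Sp Y d) + card (A - Y)"
  using assms(1)
proof (induction A rule: finite_induct)
  case empty thus ?case by simp
next
  case (insert a A)
  have um: "ultrametric_space (A \<union> Y) d" using insert.prems by (rule um_mono) auto
  have IH: "card (Sp (A \<union> Y) d) \<le> card (Sp Y d) + card (A - Y)" using insert.IH um .
  show ?case
  proof (cases "a \<in> Y")
    case True
    hence "insert a A \<union> Y = A \<union> Y" "insert a A - Y = A - Y" by auto
    thus ?thesis using IH by simp
  next
    case False
    have e: "insert a A \<union> Y = insert a (A \<union> Y)" by simp
    have "card (Sp (insert a (A \<union> Y)) d) \<le> card (Sp (A \<union> Y) d) + 1"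
      using insert.prems False insert.hyps assms by (intro step) (auto simp: e)
    moreover have "card (insert a A - Y) = card (A - Y) + 1"
      using False insert.hyps by (simp add: insert_Diff_if)
    ultimately show ?thesis using IH e by simp
  qed
qed

theorem lemma22:
  fixes X :: "'a set" and d :: "'a \<Rightarrow> 'a \<Rightarrow> real"
  assumes "class_U X d"
    and "r \<in> Sp X d"
  shows "\<exists>!B. B \<in> balls_of X d \<and> is_ball_of_radius X d r B"
proof -
  have fin: "finite X" and um: "ultrametric_space X d" and cU: "card (Sp X d) + 1 = card X"
    using assms(1) unfolding class_U_def by auto
  have U: "\<forall>a\<in>X. \<forall>b\<in>X. d a b = d b a"
    "\<forall>a\<in>X. \<forall>b\<in>X. \<forall>c\<in>X. d a c \<le> max (d a b) (d b c)"
    "\<forall>a\<in>X. \<forall>b\<in>X. d a b = 0 \<longleftrightarrow> a = b"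
    "\<forall>a\<in>X. \<forall>b\<in>X. d a b \<ge> 0"
    using um unfolding ultrametric_space_def by blast+
  obtain x y where xy: "r = d x y" "x \<in> X" "y \<in> X" "x \<noteq> y" using assms(2) unfolding Sp_def by auto
  have ex: "closed_ball_in X d r y \<in> balls_of X d \<and> is_ball_of_radius X d r (closed_ball_in X d r y)"
    using xy unfolding balls_of_def is_ball_of_radius_def Sp_at_def by blast
  have uniq: "B1 = B2" if h1: "is_ball_of_radius X d r B1" and h2: "is_ball_of_radius X d r B2" for B1 B2
  proof -
    obtain t1 a1 where t1: "t1 \<in> X" "a1 \<in> X" "a1 \<noteq> t1" "d a1 t1 = r" "B1 = closed_ball_in X d r t1"
      using h1 unfolding is_ball_of_radius_def Sp_at_def by auto
    obtain t2 a2 where t2: "t2 \<in> X" "a2 \<in> X" "a2 \<noteq> t2" "d a2 t2 = r" "B2 = closed_ball_in X d r t2"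
      using h2 unfolding is_ball_of_radius_def Sp_at_def by auto
    show ?thesis
    proof (rule ccontr)
      assume neq: "B1 \<noteq> B2"
      have R: "d t1 t2 > r"
      proof (rule ccontr)
        assume "\<not> d t1 t2 > r"
        hence le: "d t1 t2 \<le> r" by simp
        have "closed_ball_in X d r t1 = closed_ball_in X d r t2"
          unfolding closed_ball_in_def
        proof (intro set_eqI iffI)
          fix z assume "z \<in> {x \<in> X. d x t1 \<le> r}"
          hence "z \<in> X" "d z t1 \<le> r" by auto
          moreover have "d z t2 \<le> max (d z t1) (d t1 t2)" using U(2) t1 t2 \<open>z \<in> X\<close> by auto
          ultimately show "z \<in> {x \<in> X. d x t2 \<le> r}" using le by auto
        next
          fix z assume "z \<in> {x \<in> X. d x t2 \<le> r}"
          hence "z \<in> X" "d z t2 \<le> r" by auto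
          moreover have "d z t1 \<le> max (d z t2) (d t2 t1)" using U(2) t1 t2 \<open>z \<in> X\<close> by auto
          moreover have "d t2 t1 = d t1 t2" using U(1) t1 t2 by auto
          ultimately show "z \<in> {x \<in> X. d x t1 \<le> r}" using le by auto
        qed
        thus False using neq t1 t2 by simp
      qed
      define D where "D = d t1 t2"
      have rpos: "r > 0" using U(3,4) t1 by force
      have s: "\<And>a b. a \<in> X \<Longrightarrow> b \<in> X \<Longrightarrow> d a b = d b a" using U(1) by auto
      have tr: "\<And>a b c. a \<in> X \<Longrightarrow> b \<in> X \<Longrightarrow> c \<in> X \<Longrightarrow> d a c \<le> max (d a b) (d b c)"
        using U(2) by auto
      have e1: "d a1 t2 = D"
        using tr[of a1 t1 t2] tr[of t1 a1 t2] s[of a1 t1] t1 t2 R unfolding D_def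
        by (auto simp: max_def split: if_splits)
      have e2: "d t1 a2 = D"
        using tr[of t1 t2 a2] tr[of t1 a2 t2] s[of a2 t2] t1 t2 R unfolding D_def
        by (auto simp: max_def split: if_splits)
      have e3: "d a1 a2 = D"
        using tr[of a1 t1 a2] tr[of t1 a1 a2] s[of a1 t1] e2 t1 t2 R unfolding D_def
        by (auto simp: max_def split: if_splits)
      define Y where "Y = {t1, a1, t2, a2}"
      have d1: "t1 \<noteq> t2" using R rpos U(3) t1 t2 by force
      have d2: "a1 \<noteq> t2" using e1 R rpos U(3) t1 t2 D_def by force
      have d3: "t1 \<noteq> a2" using e2 R rpos U(3) t1 t2 D_def by force
      have d4: "a1 \<noteq> a2" using e3 R rpos U(3) t1 t2 D_def by force
      have cY: "card Y = 4" unfolding Y_def using d1 d2 d3 d4 t1 t2 by auto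
      have YX: "Y \<subseteq> X" unfolding Y_def using t1 t2 by auto
      have SpY: "Sp Y d \<subseteq> {r, D}"
      proof
        fix s0 assume "s0 \<in> Sp Y d"
        then obtain u v where uv: "s0 = d u v" "u \<in> Y" "v \<in> Y" "u \<noteq> v" unfolding Sp_def by auto
        have "d t1 a1 = r" "d t2 a2 = r" "d t2 t1 = D" "d t2 a1 = D" "d a2 t1 = D" "d a2 a1 = D"
          using s t1 t2 e1 e2 e3 D_def by metis+
        thus "s0 \<in> {r, D}" using uv t1 t2 e1 e2 e3 D_def unfolding Y_def by auto
      qed
      have "card (Sp Y d) \<le> card {r, D}" using SpY by (intro card_mono) auto
      also have "card {r, D} \<le> 2" by (simp add: card_insert_if)
      finally have "card (Sp Y d) \<le> 2" .
      have XYe: "(X - Y) \<union> Y = X" using YX by auto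
      have "card (Sp ((X - Y) \<union> Y) d) \<le> card (Sp Y d) + card ((X - Y) - Y)"
        apply (rule L2) using fin um XYe unfolding Y_def by auto
      moreover note XYe
      moreover have "card ((X - Y) - Y) = card X - 4" using cY YX fin
        by (simp add: card_Diff_subset finite_subset)
      ultimately show False using cU \<open>card (Sp Y d) \<le> 2\<close> cY card_mono[OF fin YX] by simp
    qed
  qed
  show ?thesis using ex uniq by blast
qed

end
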